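(* For $n\ge1$, the expected total fringe size $E^L_n=\sum_{r\ge0}E^L_{n;r}$ of a simple two-dimensional lattice path chosen uniformly at random among the $4^n$ paths of length $n$ is \[ E^L_n=\frac{4}{3\cdot4^n}\sum_{k=1}^n\Big(2k^3\big(2-2^{-v_2(k)}\big)+k\big(2^{v_2(k)+1}-1\big)\Big)\bigg[\binom{2n-1}{n-k}-\binom{2n-1}{n-k-1}\bigg], \] where $v_2(k)$ is the largest $\nu$ such that $2^\nu$ divides $k$, and binomial coefficients with negative lower index are $0$.
   Context: A simple two-dimensional lattice path is a finite nonempty word over the steps $\{\uparrow,\rightarrow,\downarrow,\leftarrow\}$; its length $|\ell|$ is the number of steps. The reduction $\Phi_L(\ell)$ of a path $\ell$ of length $\ge2$: first, if the first step of $\ell$ is vertical, the entire path is rotated by $90^\circ$ clockwise; then, if the last step is horizontal, this last step alone is rotated by $90^\circ$ clockwise. The resulting path decomposes uniquely as $H_1V_1\cdots H_kV_k$ ($k\ge1$) with each $H_i$ a nonempty maximal run of horizontal steps and each $V_i$ a nonempty maximal run of vertical steps. Each block $H_iV_i$ is replaced by $\nearrow$, $\searrow$, $\swarrow$, $\nwarrow$ according as ($H_i$ starts with $\rightarrow$, $V_i$ with $\uparrow$), ($\rightarrow$, $\downarrow$), ($\leftarrow$, $\downarrow$), ($\leftarrow$, $\uparrow$); the diagonal path is then rotated by $45^\circ$ clockwise, giving $\Phi_L(\ell)$ of length $k$. The compactification degree $\mathrm{cdeg}(\ell)$ is the number $m\ge0$ such that $\Phi_L^m(\ell)$ is a single step.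 The size of the $r$th fringe of $\ell$ is $|\Phi_L^r(\ell)|$ if $\mathrm{cdeg}(\ell)\ge r$, and $0$ otherwise; $E^L_{n;r}$ is its expectation over uniformly random paths of length $n$. *)

theory Defs
  imports Complex_Main "HOL-Computational_Algebra.Primes"
begin

datatype step = U | R | D | L

lemma UNIV_step: "(UNIV :: step set) = {U, R, D, L}"
  by (auto intro: step.exhaust)

instance step :: finite
  by standard (simp add: UNIV_step)

type_synonym lpath = "step list"

fun rot :: "step \<Rightarrow> step" where
  "rot U = R" | "rot R = D" | "rot D = L" | "rot L = U"

fun vertical :: "step \<Rightarrow> bool" where
  "vertical U = True" | "vertical D = True" | "vertical R = False" | "vertical L = False"

abbreviation horizontal :: "step \<Rightarrow> bool" where
  "horizontal s \<equiv> \<not> vertical s"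

definition norm_first :: "lpath \<Rightarrow> lpath" where
  "norm_first p = (if vertical (hd p) then map rot p else p)"

definition norm_last :: "lpath \<Rightarrow> lpath" where
  "norm_last p = (if horizontal (last p) then butlast p @ [rot (last p)] else p)"

text \<open>Block \<open>H V\<close> with H starting with h and V starting with v is replaced by a diagonal
  step; after rotating by 45 degrees clockwise: NE \<mapsto> R, SE \<mapsto> D, SW \<mapsto> L, NW \<mapsto> U.\<close>
fun diag_rot :: "step \<Rightarrow> step \<Rightarrow> step" where
  "diag_rot R U = R"
| "diag_rot R D = D"
| "diag_rot L D = L"
| "diag_rot L U = U"
| "diag_rot _ _ = undefined"

lemma length_dropWhile_le: "length (dropWhile P xs) \<le> length xs"
  by (induction xs) auto

text \<open>Decomposition into maximal blocks \<open>H\<^sub>1 V\<^sub>1 \<dots> H\<^sub>k V\<^sub>k\<close>, each block replaced by one step.\<close>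
function blocks :: "lpath \<Rightarrow> lpath" where
  "blocks [] = []"
| "blocks (x # xs) =
     (let h = takeWhile horizontal (x # xs);
          rest = dropWhile horizontal (x # xs);
          v = takeWhile vertical rest;
          rest2 = dropWhile vertical rest
      in diag_rot (hd h) (hd v) # blocks rest2)"
  by pat_completeness auto
lemma blocks_term:
  "length (dropWhile vertical (dropWhile horizontal (x # xs))) < Suc (length xs)"
proof (cases "vertical x")
  case True
  then show ?thesis using length_dropWhile_le[of vertical xs] by simp
next
  case False
  then show ?thesis
    using length_dropWhile_le[of vertical "dropWhile horizontal xs"]
          length_dropWhile_le[of horizontal xs] by simp
qed

termination
  by (relation "measure length") (use blocks_term in \<open>auto simp: Let_def\<close>)

text \<open>The reduction \<open>\<Phi>\<^sub>L\<close> (meaningful for paths of length at least 2).\<close>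
definition PhiL :: "lpath \<Rightarrow> lpath" where
  "PhiL p = blocks (norm_last (norm_first p))"

definition cdeg :: "lpath \<Rightarrow> nat" where
  "cdeg p = (LEAST m. length ((PhiL ^^ m) p) = 1)"

definition fringe_size :: "lpath \<Rightarrow> nat \<Rightarrow> nat" where
  "fringe_size p r = (if r \<le> cdeg p then length ((PhiL ^^ r) p) else 0)"

definition E_L :: "nat \<Rightarrow> nat \<Rightarrow> real" where
  "E_L n r = (\<Sum>p\<in>{p :: lpath. length p = n}. real (fringe_size p r))
              / real (card {p :: lpath. length p = n})"

definition E_L_total :: "nat \<Rightarrow> real" where
  "E_L_total n = (\<Sum>r. E_L n r)"

definition binom_int :: "nat \<Rightarrow> int \<Rightarrow> real" where
  "binom_int a b = (if b < 0 then 0 else real (a choose nat b))"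

end

theory Submission
  imports Defs
begin


fun w :: "nat \<Rightarrow> int \<Rightarrow> int" where
  "w 0 m = (if m = 0 then 1 else 0)"
| "w (Suc N) m = w N (m - 1) + w N (m + 1)"

lemma w_out: "\<bar>m\<bar> > int N \<Longrightarrow> w N m = 0"
  by (induction N arbitrary: m) auto

lemma w_sym: "w N (-m) = w N m"
proof (induction N arbitrary: m)
  case (Suc N)
  have e1: "-m - 1 = -(m + 1)" by simp
  have e2: "-m + 1 = -(m - 1)" by simp
  have "w N (-m - 1) = w N (m + 1)" by (subst e1) (rule Suc.IH)
  moreover have "w N (-m + 1) = w N (m - 1)" by (subst e2) (rule Suc.IH)
  ultimately show ?case by simp
qed auto

lemma w_parity: "odd (int N + m) \<Longrightarrow> w N m = 0"
proof (induction N arbitrary: m)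
  case (Suc N)
  have "odd (int N + (m - 1))" "odd (int N + (m + 1))" using Suc.prems by auto
  then show ?case using Suc.IH by simp
qed auto

lemma binom_int_Suc: "binom_int (Suc N) i = binom_int N i + binom_int N (i - 1)"
proof (cases "i \<le> 0")
  case True
  then show ?thesis by (cases "i = 0") (auto simp: binom_int_def)
next
  case False
  then have "i = int (Suc (nat (i - 1)))" by simp
  then obtain k where k: "i = int (Suc k)" by blast
  have "nat (int (Suc k) - 1) = k" by simp
  then show ?thesis by (simp add: binom_int_def k del: of_nat_Suc)
qed

lemma w_binom: "real_of_int (w N (int N - 2 * i)) = binom_int N i"
proof (induction N arbitrary: i)
  case 0 then show ?case by (auto simp: binom_int_def)
next
  case (Suc N)
  have e1: "int (Suc N) - 2 * i - 1 = int N - 2 * i" by simp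
  have e2: "int (Suc N) - 2 * i + 1 = int N - 2 * (i - 1)" by simp
  show ?case using Suc.IH[of i] Suc.IH[of "i - 1"] by (simp only: w.simps e1 e2 binom_int_Suc of_int_add)
qed


definition Dop :: "nat \<Rightarrow> (nat \<Rightarrow> int) \<Rightarrow> int" where
  "Dop N f = (\<Sum>i\<le>N. int (N choose i) * 2 ^ (N - i) * f i)"

lemma Dop_Suc: "Dop (Suc N) f = 2 * Dop N f + Dop N (\<lambda>i. f (Suc i))"
proof -
  have "Dop (Suc N) f = 2 ^ Suc N * f 0 + (\<Sum>i\<le>N. int (Suc N choose Suc i) * 2 ^ (N - i) * f (Suc i))"
    unfolding Dop_def by (subst sum.atMost_Suc_shift) simp
  also have "\<dots> = 2 ^ Suc N * f 0 + Dop N (\<lambda>i. f (Suc i))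
      + (\<Sum>i\<le>N. int (N choose Suc i) * 2 ^ (N - i) * f (Suc i))"
    unfolding Dop_def by (simp add: sum.distrib algebra_simps)
  also have "(\<Sum>i\<le>N. int (N choose Suc i) * 2 ^ (N - i) * f (Suc i))
      = (\<Sum>i\<le>Suc N. int (N choose i) * 2 ^ (Suc N - i) * f i) - 2 ^ Suc N * f 0"
    by (subst sum.atMost_Suc_shift) simp
  also have "(\<Sum>i\<le>Suc N. int (N choose i) * 2 ^ (Suc N - i) * f i)
      = (\<Sum>i\<le>N. int (N choose i) * 2 ^ (Suc N - i) * f i)"
    by simp
  also have "\<dots> = 2 * Dop N f"
    unfolding Dop_def sum_distrib_left
    by (intro sum.cong refl) (simp add: Suc_diff_le)
  finally show ?thesis by simp
qed

lemma Dop_w: "Dop N (\<lambda>i. w i a) = w (2 * N) (2 * a)"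
proof (induction N arbitrary: a)
  case 0 then show ?case by (simp add: Dop_def)
next
  case (Suc N)
  have "Dop N (\<lambda>i. w (Suc i) a) = Dop N (\<lambda>i. w i (a - 1)) + Dop N (\<lambda>i. w i (a + 1))"
    unfolding Dop_def by (simp add: sum.distrib algebra_simps)
  then have "Dop (Suc N) (\<lambda>i. w i a) = 2 * w (2*N) (2*a) + w (2*N) (2*a - 2) + w (2*N) (2*a+2)"
    using Suc.IH[of a] Suc.IH[of "a - 1"] Suc.IH[of "a+1"] by (simp add: Dop_Suc algebra_simps)
  moreover have "2 * Suc N = Suc (Suc (2 * N))" by simp
  ultimately show ?case by (simp add: algebra_simps)
qed


lemma odd_reindex:
  fixes g :: "nat \<Rightarrow> 'a::comm_monoid_add"
  assumes ev: "\<And>i. even i \<Longrightarrow> g i = 0" and big: "\<And>i. i \<ge> n \<Longrightarrow> g i = 0"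
  shows "(\<Sum>i<n. g i) = (\<Sum>k=1..n. g (2*k-1))"
proof -
  have inj: "inj_on (\<lambda>k. 2*k-1) {1..n}" by (auto simp: inj_on_def)
  have "(\<Sum>k=1..n. g (2*k-1)) = sum g ((\<lambda>k. 2*k-1) ` {1..n})"
    by (subst sum.reindex[OF inj]) simp
  also have "\<dots> = sum g {..<2*n}"
  proof (rule sum.mono_neutral_left)
    show "(\<lambda>k. 2*k-1) ` {1..n} \<subseteq> {..<2*n}" by auto
    show "\<forall>i\<in>{..<2 * n} - (\<lambda>k. 2 * k - 1) ` {1..n}. g i = 0"
    proof
      fix i assume i: "i \<in> {..<2 * n} - (\<lambda>k. 2 * k - 1) ` {1..n}"
      show "g i = 0"
      proof (cases "even i")
        case False
        then have "i = 2 * ((i+1) div 2) - 1" "(i+1) div 2 \<in> {1..n}" using i by auto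
        then show ?thesis using i by blast
      qed (rule ev)
    qed
  qed auto
  also have "\<dots> = sum g {..<n}"
    by (rule sum.mono_neutral_right) (auto intro: big)
  finally show ?thesis by simp
qed

definition Bw :: "nat \<Rightarrow> int \<Rightarrow> int" where
  "Bw n j = w (2*n-1) (2*j-1) - w (2*n-1) (2*j+1)"

lemma K_identity:
  assumes "n \<ge> 1"
  shows "(\<Sum>k=1..n. int ((n-1) choose (2*k-1)) * 2 ^ (n - 2*k) * Bw k j) = Bw n (2*j)"
proof -
  define g where "g i = int ((n-1) choose i) * 2 ^ (n - 1 - i) * (w i (2*j-1) - w i (2*j+1))" for i
  have "Dop (n-1) (\<lambda>i. w i (2*j-1) - w i (2*j+1)) = Dop (n-1) (\<lambda>i. w i (2*j-1)) - Dop (n-1) (\<lambda>i. w i (2*j+1))"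
    unfolding Dop_def by (simp add: sum_subtractf algebra_simps)
  also have "\<dots> = w (2*(n-1)) (4*j - 2) - w (2*(n-1)) (4*j+2)"
    by (simp add: Dop_w algebra_simps)
  also have "\<dots> = Bw n (2*j)"
  proof -
    have "2*n-1 = Suc (2*(n-1))" using assms by simp
    then show ?thesis unfolding Bw_def by (simp add: algebra_simps)
  qed
  finally have 1: "(\<Sum>i<n. g i) = Bw n (2*j)"
    unfolding Dop_def g_def using assms by (simp add: lessThan_Suc_atMost[symmetric])
  have "(\<Sum>i<n. g i) = (\<Sum>k=1..n. g (2*k-1))"
  proof (rule odd_reindex)
    fix i :: nat assume "even i"
    then show "g i = 0" unfolding g_def by (simp add: w_parity)
  next
    fix i assume "n \<le> i" then have "n - 1 < i" using assms by simp then show "g i = 0" unfolding g_def by simp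
  qed
  also have "\<dots> = (\<Sum>k=1..n. int ((n-1) choose (2*k-1)) * 2 ^ (n - 2*k) * Bw k j)"
    by (intro sum.cong refl) (auto simp: g_def Bw_def)
  finally show ?thesis using 1 by simp
qed


lemma Bw_big: "n \<ge> 1 \<Longrightarrow> j > int n \<Longrightarrow> Bw n j = 0"
  unfolding Bw_def by (simp add: w_out)

lemma Bw_0: "Bw n 0 = 0"
  unfolding Bw_def using w_sym[of "2*n-1" 1] by simp

lemma w_SS: "w (Suc (Suc N)) m = w N (m - 2) + 2 * w N m + w N (m + 2)"
  by (simp add: algebra_simps)

lemma Bw_Suc: "n \<ge> 1 \<Longrightarrow> Bw (Suc n) j = Bw n (j - 1) + 2 * Bw n j + Bw n (j + 1)"
proof -
  assume "n \<ge> 1"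
  then have e: "2 * Suc n - 1 = Suc (Suc (2*n-1))" by simp
  show ?thesis unfolding Bw_def e w_SS by (simp add: algebra_simps)
qed

lemma bsum:
  fixes g :: "nat \<Rightarrow> real"
  assumes n: "n \<ge> 1" and g0: "g 0 = 0"
  shows "(\<Sum>j=1..Suc n. g j * Bw (Suc n) (int j))
       = (\<Sum>j=1..n. (g (j-1) + 2 * g j + g (j+1)) * Bw n (int j))"
proof -
  define b where "b j = real_of_int (Bw n (int j))" for j
  have b0: "b 0 = 0" by (simp add: b_def Bw_0)
  have bbig: "b j = 0" if "j > n" for j using that n by (simp add: b_def Bw_big)
  have "(\<Sum>j=1..Suc n. g j * Bw (Suc n) (int j)) = (\<Sum>j\<le>Suc n. g j * Bw (Suc n) (int j))"
    by (rule sum.mono_neutral_left) (auto simp: g0 Suc_le_eq)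
  also have "\<dots> = (\<Sum>j\<le>Suc n. g j * b (j - 1) + 2 * (g j * b j) + g j * b (j + 1))"
  proof (intro sum.cong refl)
    fix j assume "j \<in> {..Suc n}"
    show "g j * Bw (Suc n) (int j) = g j * b (j - 1) + 2 * (g j * b j) + g j * b (j + 1)"
    proof (cases "j = 0")
      case True then show ?thesis by (simp add: g0)
    next
      case False
      then have "int j - 1 = int (j - 1)" by simp
      then show ?thesis using n False by (simp add: Bw_Suc b_def algebra_simps)
    qed
  qed
  also have "\<dots> = (\<Sum>j\<le>Suc n. g j * b (j - 1)) + 2 * (\<Sum>j\<le>Suc n. g j * b j) + (\<Sum>j\<le>Suc n. g j * b (j + 1))"
    by (simp add: sum.distrib sum_distrib_left)
  also have "(\<Sum>j\<le>Suc n. g j * b (j - 1)) = (\<Sum>j\<le>Suc n. g (j + 1) * b j)"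
  proof -
    have "(\<Sum>j\<le>Suc (Suc n). g j * b (j - 1)) = (\<Sum>j\<le>Suc n. g (j + 1) * b j)"
      by (subst sum.atMost_Suc_shift) (simp add: g0)
    moreover have "(\<Sum>j\<le>Suc (Suc n). g j * b (j - 1)) = (\<Sum>j\<le>Suc n. g j * b (j - 1))"
      by (simp add: bbig)
    ultimately show ?thesis by simp
  qed
  also have "(\<Sum>j\<le>Suc n. g j * b (j + 1)) = (\<Sum>j\<le>Suc n. g (j - 1) * b j)"
  proof -
    have "(\<Sum>j\<le>Suc (Suc n). g (j - 1) * b j) = (\<Sum>j\<le>Suc n. g j * b (j + 1))"
      by (subst sum.atMost_Suc_shift) (simp add: b0)
    moreover have "(\<Sum>j\<le>Suc (Suc n). g (j - 1) * b j) = (\<Sum>j\<le>Suc n. g (j - 1) * b j)"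
      by (simp add: bbig)
    ultimately show ?thesis by simp
  qed
  finally have "(\<Sum>j=1..Suc n. g j * Bw (Suc n) (int j)) = (\<Sum>j\<le>Suc n. (g (j-1) + 2 * g j + g (j+1)) * b j)"
    by (simp add: sum.distrib sum_distrib_left algebra_simps)
  also have "\<dots> = (\<Sum>j=1..n. (g (j-1) + 2 * g j + g (j+1)) * b j)"
    by (rule sum.mono_neutral_right) (auto simp: b0 bbig Suc_le_eq)
  finally show ?thesis by (simp add: b_def)
qed

lemma moment1: "n \<ge> 1 \<Longrightarrow> (\<Sum>j=1..n. real j * Bw n (int j)) = 4 ^ (n - 1)"
proof (induction n rule: dec_induct)
  case base
  then show ?case by (simp add: Bw_def)
next
  case (step n)
  have "(\<Sum>j=1..Suc n. real j * Bw (Suc n) (int j)) = (\<Sum>j=1..n. (real (j-1) + 2 * real j + real (j+1)) * Bw n (int j))"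
    using bsum[of n real] step by simp
  also have "\<dots> = (\<Sum>j=1..n. 4 * (real j * Bw n (int j)))"
    by (intro sum.cong refl) (auto simp: of_nat_diff algebra_simps)
  also have "\<dots> = 4 * 4 ^ (n - 1)" using step.IH by (simp add: sum_distrib_left[symmetric])
  also have "\<dots> = 4 ^ (Suc n - 1)" using step.hyps by (cases n) auto
  finally show ?case .
qed


lemma moment3: "n \<ge> 1 \<Longrightarrow> (\<Sum>j=1..n. (2 * real j ^ 3 + real j) * Bw n (int j)) = 3 * real n * 4 ^ (n - 1)"
proof (induction n rule: dec_induct)
  case base
  then show ?case by (simp add: Bw_def)
next
  case (step n)
  have "(\<Sum>j=1..Suc n. (2 * real j ^ 3 + real j) * Bw (Suc n) (int j))
     = (\<Sum>j=1..n. ((2 * real (j-1) ^ 3 + real (j-1)) + 2 * (2 * real j ^ 3 + real j) + (2 * real (j+1) ^ 3 + real (j+1))) * Bw n (int j))"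
    by (rule bsum[where g="\<lambda>j. 2 * real j ^ 3 + real j"]) (use step.hyps in auto)
  also have "\<dots> = (\<Sum>j=1..n. 4 * ((2 * real j ^ 3 + real j) * Bw n (int j)) + 12 * (real j * Bw n (int j)))"
  proof (intro sum.cong refl)
    fix j assume "j \<in> {1..n}"
    then have e: "real (j-1) = real j - 1" by (simp add: of_nat_diff)
    have *: "2*(x-1)^3 + (x-1) + 2*(2*x^3+x) + (2*(x+1)^3 + (x+1)) = 4*(2*x^3+x) + 12*x" for x :: real
      by (simp add: power3_eq_cube algebra_simps)
    show "((2 * real (j-1) ^ 3 + real (j-1)) + 2 * (2 * real j ^ 3 + real j) + (2 * real (j+1) ^ 3 + real (j+1))) * Bw n (int j) = 4 * ((2 * real j ^ 3 + real j) * Bw n (int j)) + 12 * (real j * Bw n (int j))"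
      unfolding e using *[of "real j"] by (simp add: algebra_simps)
  qed
  also have "\<dots> = 4 * (3 * real n * 4 ^ (n - 1)) + 12 * 4 ^ (n - 1)"
    using step.IH moment1[of n] step.hyps(1) by (simp add: sum.distrib sum_distrib_left[symmetric])
  also have "\<dots> = 3 * real (Suc n) * 4 ^ (Suc n - 1)"
  proof -
    obtain m where m: "n = Suc m" using step.hyps by (cases n) auto
    show ?thesis unfolding m by (simp add: algebra_simps)
  qed
  finally show ?case .
qed


definition acoef :: "nat \<Rightarrow> real" where
  "acoef k = 2 * real k ^ 3 * (2 - 1 / 2 ^ multiplicity (2::nat) k)
        + real k * (2 ^ (multiplicity (2::nat) k + 1) - 1)"

lemma acoef_rel:
  assumes "i \<ge> 1"
  shows "acoef i - 4 * (if even i then acoef (i div 2) else 0) = 2 * real i ^ 3 + real i"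
proof (cases "even i")
  case True
  then obtain m where m: "i = 2 * m" by blast
  with assms have "m \<noteq> 0" by auto
  then have mu: "multiplicity (2::nat) i = Suc (multiplicity 2 m)"
    unfolding m by (simp add: multiplicity_times_same)
  define p :: real where "p = 2 ^ multiplicity (2::nat) m"
  have p: "p > 0" by (simp add: p_def)
  have "acoef i = 2 * (2 * real m) ^ 3 * (2 - 1 / (2 * p)) + 2 * real m * (4 * p - 1)"
    unfolding acoef_def mu p_def by (simp add: m)
  moreover have "acoef (i div 2) = 2 * real m ^ 3 * (2 - 1 / p) + real m * (2 * p - 1)"
    unfolding acoef_def p_def by (simp add: m)
  moreover have "2 * (2 * x) ^ 3 * (2 - 1 / (2 * p)) + 2 * x * (4 * p - 1)
      - 4 * (2 * x ^ 3 * (2 - 1 / p) + x * (2 * p - 1)) = 2 * (2 * x) ^ 3 + 2 * x" for x :: real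
    using p by (simp add: field_simps power3_eq_cube)
  ultimately show ?thesis using True unfolding m by simp
next
  case False
  then have "multiplicity (2::nat) i = 0" by (simp add: not_dvd_imp_multiplicity_0)
  then show ?thesis using False by (simp add: acoef_def)
qed


definition G :: "nat \<Rightarrow> real" where
  "G n = 4 / 3 * (\<Sum>k=1..n. acoef k * Bw n (int k))"

lemma even_reindex:
  assumes n: "n \<ge> 1"
  shows "(\<Sum>j=1..n. acoef j * Bw n (2 * int j))
       = (\<Sum>i=1..n. (if even i then acoef (i div 2) else 0) * Bw n (int i))"
proof -
  define f where "f i = (if even i then acoef (i div 2) else 0) * Bw n (int i)" for i
  have inj: "inj_on (\<lambda>j. 2*j) {1..n::nat}" by (auto simp: inj_on_def)
  have "(\<Sum>j=1..n. acoef j * Bw n (2 * int j)) = (\<Sum>j=1..n. f (2*j))"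
    by (simp add: f_def)
  also have "\<dots> = sum f ((\<lambda>j. 2*j) ` {1..n})"
    by (subst sum.reindex[OF inj]) simp
  also have "\<dots> = sum f {1..2*n}"
  proof (rule sum.mono_neutral_left)
    show "\<forall>i\<in>{1..2 * n} - (\<lambda>j. 2 * j) ` {1..n}. f i = 0"
    proof
      fix i assume i: "i \<in> {1..2 * n} - (\<lambda>j. 2 * j) ` {1..n}"
      show "f i = 0"
      proof (cases "even i")
        case True
        then have "i = 2 * (i div 2)" "i div 2 \<in> {1..n}" using i by auto
        then show ?thesis using i by blast
      qed (simp add: f_def)
    qed
  qed auto
  also have "\<dots> = sum f {1..n}"
    by (rule sum.mono_neutral_right) (auto simp: f_def Bw_big n)
  finally show ?thesis by (simp add: f_def)
qed

lemma G_rec: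
  assumes n: "n \<ge> 1"
  shows "G n = real n * 4 ^ n + 4 * (\<Sum>k=1..n. real ((n-1) choose (2*k-1)) * 2 ^ (n - 2*k) * G k)"
proof -
  define c where "c k = real ((n-1) choose (2*k-1)) * 2 ^ (n - 2*k)" for k
  have "(\<Sum>k=1..n. c k * G k) = (\<Sum>k=1..n. c k * (4/3 * (\<Sum>j=1..n. acoef j * Bw k (int j))))"
  proof (intro sum.cong refl)
    fix k assume k: "k \<in> {1..n}"
    have "(\<Sum>j=1..k. acoef j * Bw k (int j)) = (\<Sum>j=1..n. acoef j * Bw k (int j))"
      by (rule sum.mono_neutral_left) (use k in \<open>auto simp: Bw_big\<close>)
    then show "c k * G k = c k * (4/3 * (\<Sum>j=1..n. acoef j * Bw k (int j)))"
      by (simp add: G_def)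
  qed
  also have "\<dots> = 4/3 * (\<Sum>j=1..n. acoef j * (\<Sum>k=1..n. c k * Bw k (int j)))"
    by (simp add: sum_distrib_left sum_distrib_right mult_ac) (rule sum.swap)
  also have "\<dots> = 4/3 * (\<Sum>j=1..n. acoef j * Bw n (2 * int j))"
  proof -
    have "(\<Sum>k=1..n. c k * Bw k (int j)) = Bw n (2 * int j)" for j
    proof -
      have "real_of_int (\<Sum>k=1..n. int ((n-1) choose (2*k-1)) * 2 ^ (n - 2*k) * Bw k (int j))
            = real_of_int (Bw n (2 * int j))"
        using K_identity[OF n, of "int j"] by simp
      then show ?thesis by (simp add: c_def)
    qed
    then show ?thesis by simp
  qed
  also have "\<dots> = 4/3 * (\<Sum>i=1..n. (if even i then acoef (i div 2) else 0) * Bw n (int i))"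
    using even_reindex[OF n] by (simp only:)
  finally have 1: "4 * (\<Sum>k=1..n. c k * G k) = 16/3 * (\<Sum>i=1..n. (if even i then acoef (i div 2) else 0) * Bw n (int i))"
    by simp
  have "G n - 16/3 * (\<Sum>i=1..n. (if even i then acoef (i div 2) else 0) * Bw n (int i))
      = 4/3 * (\<Sum>i=1..n. (acoef i - 4 * (if even i then acoef (i div 2) else 0)) * Bw n (int i))"
    by (simp add: G_def sum_subtractf sum_distrib_left algebra_simps)
  also have "\<dots> = 4/3 * (\<Sum>i=1..n. (2 * real i ^ 3 + real i) * Bw n (int i))"
    by (intro arg_cong[where f="\<lambda>x. 4/3 * x"] sum.cong refl) (simp add: acoef_rel)
  also have "\<dots> = 4/3 * (3 * real n * 4 ^ (n - 1))"
    using moment3[OF n] by simp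
  also have "\<dots> = real n * 4 ^ n"
    using n by (cases n) auto
  finally show ?thesis using 1 by (simp add: c_def)
qed


lemma bA: "horizontal x \<Longrightarrow> horizontal y \<Longrightarrow> blocks (x#y#r) = blocks (x#r)"
  by (simp add: Let_def)

lemma bB: "horizontal x \<Longrightarrow> vertical v \<Longrightarrow> vertical v' \<Longrightarrow> blocks (x#v#v'#r) = blocks (x#v#r)"
  by (simp add: Let_def)

lemma bC: "horizontal x \<Longrightarrow> vertical v \<Longrightarrow> r = [] \<or> horizontal (hd r) \<Longrightarrow>
    blocks (x#v#r) = diag_rot x v # blocks r"
  by (cases r) (auto simp: Let_def)

lemma blocks_ne: "p \<noteq> [] \<Longrightarrow> blocks p \<noteq> []"
  by (cases p) (auto simp: Let_def)

fun xof :: "step \<Rightarrow> step" where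
  "xof R = R" | "xof D = R" | "xof L = L" | "xof U = L"
fun vof :: "step \<Rightarrow> step" where
  "vof R = U" | "vof U = U" | "vof D = D" | "vof L = D"

lemma xof_vof: "horizontal (xof c)" "vertical (vof c)" "diag_rot (xof c) (vof c) = c"
  by (cases c; simp)+

lemma xof_diag: "horizontal x \<Longrightarrow> vertical v \<Longrightarrow> xof (diag_rot x v) = x \<and> vof (diag_rot x v) = v"
  by (cases x; cases v; simp)

lemma hor_cases: "horizontal y \<longleftrightarrow> y \<in> {R, L}" by (cases y) auto
lemma ver_cases: "vertical y \<longleftrightarrow> y \<in> {U, D}" by (cases y) auto


definition Nn :: "nat \<Rightarrow> lpath set" where
  "Nn n = {p. length p = n \<and> horizontal (hd p) \<and> vertical (last p)}"
definition fib :: "nat \<Rightarrow> lpath \<Rightarrow> lpath set" where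
  "fib n q = {p \<in> Nn n. blocks p = q}"
definition An :: "nat \<Rightarrow> lpath \<Rightarrow> lpath set" where
  "An n q = {p \<in> Nn n. blocks p = q \<and> horizontal (p ! 1)}"
definition Bn :: "nat \<Rightarrow> lpath \<Rightarrow> lpath set" where
  "Bn n q = {p \<in> Nn n. blocks p = q \<and> vertical (p ! 1)}"

lemma finite_len: "finite {p :: lpath. length p = n}"
  using finite_lists_length_eq[of "UNIV :: step set" n] by simp

lemma finite_Nn: "finite (Nn n)"
  by (rule finite_subset[OF _ finite_len[of n]]) (auto simp: Nn_def)

lemma finite_fib: "finite (fib n q)" "finite (An n q)" "finite (Bn n q)"
  by (rule finite_subset[OF _ finite_Nn[of n]]; auto simp: fib_def An_def Bn_def)+

lemma Nn_1: "Nn 1 = {}"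
  by (auto simp: Nn_def length_Suc_conv)

lemma fib_split: "fib n q = An n q \<union> Bn n q" "An n q \<inter> Bn n q = {}"
  by (auto simp: fib_def An_def Bn_def)

lemma card_fib_split: "card (fib n q) = card (An n q) + card (Bn n q)"
  using fib_split[of n q] finite_fib by (simp add: card_Un_disjoint)

lemma len3: "length p \<ge> 3 \<Longrightarrow> \<exists>x y z r. p = x#y#z#r"
  by (cases p; cases "tl p"; cases "tl (tl p)") auto

lemma len2: "length p \<ge> 2 \<Longrightarrow> \<exists>x y r. p = x#y#r"
  by (cases p; cases "tl p") auto

lemma An_Suc:
  assumes n: "n \<ge> 2"
  shows "An (Suc n) q = (\<lambda>(y,p). hd p # y # tl p) ` ({R,L} \<times> fib n q)"
proof (intro equalityI subsetI)
  fix p assume p: "p \<in> An (Suc n) q"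
  then have len: "length p = Suc n" by (simp add: An_def Nn_def)
  with n obtain x y z r' where "p = x # y # z # r'" using len3[of p] by auto
  then obtain r where pe: "p = x # y # r" and r: "r \<noteq> []" by auto
  have hx: "horizontal x" and hy: "horizontal y" and lr: "vertical (last r)" and bq: "blocks p = q"
    using p r by (auto simp: An_def Nn_def pe)
  have "x # r \<in> fib n q" using len r hx lr bq bA[OF hx hy, of r] by (auto simp: fib_def Nn_def pe)
  moreover have "y \<in> {R, L}" using hy by (simp add: hor_cases)
  ultimately show "p \<in> (\<lambda>(y,p). hd p # y # tl p) ` ({R,L} \<times> fib n q)"
    unfolding pe by (auto intro!: image_eqI[where x="(y, x#r)"])
next
  fix p assume "p \<in> (\<lambda>(y,p). hd p # y # tl p) ` ({R,L} \<times> fib n q)"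
  then obtain y p0 where y: "y \<in> {R,L}" and p0: "p0 \<in> fib n q" and pe: "p = hd p0 # y # tl p0" by auto
  have len: "length p0 = n" using p0 by (simp add: fib_def Nn_def)
  with n obtain x y' r' where "p0 = x # y' # r'" using len2[of p0] by auto
  then obtain r where p0e: "p0 = x # r" and r: "r \<noteq> []" by auto
  have hx: "horizontal x" and lr: "vertical (last r)" and bq: "blocks p0 = q"
    using p0 r by (auto simp: fib_def Nn_def p0e)
  have hy: "horizontal y" using y by (simp add: hor_cases)
  show "p \<in> An (Suc n) q"
    using len r hx hy lr bq bA[OF hx hy, of r] by (auto simp: An_def Nn_def pe p0e)
qed

lemma card_An_Suc:
  assumes n: "n \<ge> 2"
  shows "card (An (Suc n) q) = 2 * card (fib n q)"
proof -
  have inj: "inj_on (\<lambda>(y,p). hd p # y # tl p) ({R,L} \<times> fib n q)"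
  proof (rule inj_on_inverseI[where g="\<lambda>l. (l ! 1, hd l # tl (tl l))"])
    fix a assume "a \<in> {R,L} \<times> fib n q"
    then obtain y p where a: "a = (y, p)" and "p \<in> fib n q" by auto
    then have "p \<noteq> []" using n by (auto simp: fib_def Nn_def)
    then show "(\<lambda>l. (l ! 1, hd l # tl (tl l))) ((\<lambda>(y,p). hd p # y # tl p) a) = a"
      by (simp add: a)
  qed
  show ?thesis unfolding An_Suc[OF n] card_image[OF inj]
    using finite_fib by (simp add: card_cartesian_product)
qed


lemma Bn_Suc:
  assumes n: "n \<ge> 2" and q: "q \<noteq> []"
  shows "Bn (Suc n) q = (\<lambda>(z,p). hd p # hd (tl p) # z # tl (tl p)) ` ({U,D} \<times> Bn n q)
                        \<union> (\<lambda>r. xof (hd q) # vof (hd q) # r) ` fib (n-1) (tl q)"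
proof (intro equalityI subsetI)
  fix p assume p: "p \<in> Bn (Suc n) q"
  then have len: "length p = Suc n" by (simp add: Bn_def Nn_def)
  with n obtain x v z r where pe: "p = x # v # z # r" using len3[of p] by auto
  have hx: "horizontal x" and vv: "vertical v" and lr: "vertical (last (z#r))" and bq: "blocks p = q"
    using p by (auto simp: Bn_def Nn_def pe)
  show "p \<in> (\<lambda>(z,p). hd p # hd (tl p) # z # tl (tl p)) ` ({U,D} \<times> Bn n q)
                        \<union> (\<lambda>r. xof (hd q) # vof (hd q) # r) ` fib (n-1) (tl q)"
  proof (cases "vertical z")
    case True
    have "x # v # r \<in> Bn n q"
      using len hx vv lr bq bB[OF hx vv True, of r] True by (auto simp: Bn_def Nn_def pe)
    moreover have "z \<in> {U, D}" using True by (simp add: ver_cases)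
    ultimately show ?thesis unfolding pe by (auto intro!: image_eqI[where x="(z, x#v#r)"])
  next
    case False
    have bl: "blocks p = diag_rot x v # blocks (z # r)" unfolding pe by (rule bC[OF hx vv]) (use False in simp)
    then have "hd q = diag_rot x v" "tl q = blocks (z#r)" using bq by auto
    then have "xof (hd q) = x" "vof (hd q) = v" using xof_diag[OF hx vv] by auto
    moreover have "z # r \<in> fib (n-1) (tl q)"
      using len lr False \<open>tl q = blocks (z#r)\<close> by (auto simp: fib_def Nn_def pe)
    ultimately show ?thesis unfolding pe by auto
  qed
next
  fix p assume "p \<in> (\<lambda>(z,p). hd p # hd (tl p) # z # tl (tl p)) ` ({U,D} \<times> Bn n q)
                        \<union> (\<lambda>r. xof (hd q) # vof (hd q) # r) ` fib (n-1) (tl q)"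
  then consider (a) z p0 where "z \<in> {U,D}" "p0 \<in> Bn n q" "p = hd p0 # hd (tl p0) # z # tl (tl p0)"
    | (b) r where "r \<in> fib (n-1) (tl q)" "p = xof (hd q) # vof (hd q) # r" by auto
  then show "p \<in> Bn (Suc n) q"
  proof cases
    case a
    have len: "length p0 = n" using a by (simp add: Bn_def Nn_def)
    with n obtain x v r where p0e: "p0 = x # v # r" using len2[of p0] by auto
    have hx: "horizontal x" and vv: "vertical v" and lr: "vertical (last (x # v # r))" and bq: "blocks p0 = q"
      using a by (auto simp: Bn_def Nn_def p0e)
    have vz: "vertical z" using a by (auto simp: ver_cases)
    have "vertical (last (z # r))" using lr vz by (cases r) auto
    then show ?thesis using a len hx vv vz bq bB[OF hx vv vz, of r] by (auto simp: Bn_def Nn_def p0e)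
  next
    case b
    have len: "length r = n - 1" and lr: "vertical (last r)" and hr: "horizontal (hd r)" and br: "blocks r = tl q"
      using b by (auto simp: fib_def Nn_def)
    have rne: "r \<noteq> []" using len n by auto
    have "blocks p = q"
      using b br q bC[OF xof_vof(1) xof_vof(2), of r "hd q" "hd q"] hr xof_vof(3) by auto
    then show ?thesis using b len lr hr rne n xof_vof(1,2)[of "hd q"] by (auto simp: Bn_def Nn_def)
  qed
qed

lemma card_Bn_Suc:
  assumes n: "n \<ge> 2" and q: "q \<noteq> []"
  shows "card (Bn (Suc n) q) = 2 * card (Bn n q) + card (fib (n-1) (tl q))"
proof -
  let ?f = "\<lambda>(z,p). hd p # hd (tl p) # z # tl (tl p)"
  let ?g = "\<lambda>r. xof (hd q) # vof (hd q) # r"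
  have inj: "inj_on ?f ({U,D} \<times> Bn n q)"
  proof (rule inj_on_inverseI[where g="\<lambda>l. (l ! 2, hd l # hd (tl l) # tl (tl (tl l)))"])
    fix a assume "a \<in> {U,D} \<times> Bn n q"
    then obtain z p where a: "a = (z, p)" and "p \<in> Bn n q" by auto
    then have "length p = n" by (auto simp: Bn_def Nn_def)
    then obtain x v r where "p = x # v # r" using n len2[of p] by auto
    then show "(\<lambda>l. (l ! 2, hd l # hd (tl l) # tl (tl (tl l)))) (?f a) = a"
      by (simp add: a)
  qed
  have inj2: "inj_on ?g (fib (n-1) (tl q))" by (auto simp: inj_on_def)
  have disj: "?f ` ({U,D} \<times> Bn n q) \<inter> ?g ` fib (n-1) (tl q) = {}"
  proof -
    have "vertical (l ! 2)" if "l \<in> ?f ` ({U,D} \<times> Bn n q)" for l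
      using that by (auto simp: ver_cases)
    moreover have "horizontal (l ! 2)" if lin: "l \<in> ?g ` fib (n-1) (tl q)" for l
    proof -
      obtain r where r: "r \<in> fib (n-1) (tl q)" "l = ?g r" using lin by auto
      then have "r \<noteq> []" "horizontal (hd r)" using n by (auto simp: fib_def Nn_def)
      then show ?thesis using r by (cases r) auto
    qed
    ultimately show ?thesis by blast
  qed
  show ?thesis
    unfolding Bn_Suc[OF n q]
    apply (subst card_Un_disjoint)
    using finite_fib disj apply auto[3]
    using card_image[OF inj] card_image[OF inj2] finite_fib by (simp add: card_cartesian_product)
qed

lemma An_2: "An 2 q = {}"
  by (auto simp: An_def Nn_def length_Suc_conv numeral_2_eq_2)

lemma card_Bn_2: "card (Bn 2 q) = (if length q = 1 then 1 else 0)"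
proof -
  have "Bn 2 q = (if length q = 1 then {[xof (hd q), vof (hd q)]} else {})"
  proof (intro equalityI subsetI)
    fix p assume p: "p \<in> Bn 2 q"
    then obtain x v where pe: "p = [x, v]" by (auto simp: Bn_def Nn_def length_Suc_conv numeral_2_eq_2)
    have hx: "horizontal x" and vv: "vertical v" and bq: "blocks p = q" using p by (auto simp: Bn_def Nn_def pe)
    have "q = [diag_rot x v]" using bq bC[OF hx vv, of "[]"] by (simp add: pe)
    then show "p \<in> (if length q = 1 then {[xof (hd q), vof (hd q)]} else {})"
      using xof_diag[OF hx vv] by (simp add: pe)
  next
    fix p assume p: "p \<in> (if length q = 1 then {[xof (hd q), vof (hd q)]} else {})"
    then obtain c where q: "q = [c]" and pe: "p = [xof c, vof c]"
      by (cases q) (auto split: if_splits)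
    show "p \<in> Bn 2 q" using bC[OF xof_vof(1,2), of "[]" c] xof_vof[of c]
      by (simp add: Bn_def Nn_def pe q)
  qed
  then show ?thesis by simp
qed


definition PAB :: "nat \<Rightarrow> bool" where
  "PAB n = (\<forall>q. length q \<ge> 1 \<longrightarrow>
      card (An n q) * 4 ^ length q = ((n-2) choose (2 * length q - 1)) * 2 ^ n \<and>
      card (Bn n q) * 4 ^ length q = ((n-2) choose (2 * length q - 2)) * 2 ^ n)"

lemma fib_empty: "n \<ge> 1 \<Longrightarrow> fib n [] = {}"
proof -
  assume n: "n \<ge> 1"
  have "p \<notin> fib n []" for p
  proof
    assume "p \<in> fib n []"
    then have "length p = n" "blocks p = []" by (auto simp: fib_def Nn_def)
    moreover have "p \<noteq> []" using n \<open>length p = n\<close> by auto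
    ultimately show False using blocks_ne[of p] by simp
  qed
  then show ?thesis by blast
qed

lemma card_fib_from:
  assumes "m \<ge> 1" "m \<ge> 2 \<longrightarrow> PAB m" "length q \<ge> 1"
  shows "card (fib m q) * 4 ^ length q = ((m-1) choose (2 * length q - 1)) * 2 ^ m"
proof (cases "m = 1")
  case True then show ?thesis using assms Nn_1 by (simp add: fib_def)
next
  case False
  then have m2: "m \<ge> 2" and P: "PAB m" using assms by auto
  obtain j where m: "m = Suc (Suc j)" using m2 by (metis add_2_eq_Suc le_Suc_ex)
  obtain k where k: "length q = Suc k" using assms(3) by (cases "length q") auto
  have "card (fib m q) * 4 ^ length q = card (An m q) * 4 ^ length q + card (Bn m q) * 4 ^ length q"
    by (simp add: card_fib_split algebra_simps)
  also have "\<dots> = ((m-2) choose (2 * length q - 1)) * 2 ^ m + ((m-2) choose (2 * length q - 2)) * 2 ^ m"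
    using P assms(3) by (simp add: PAB_def)
  also have "\<dots> = ((m-1) choose (2 * length q - 1)) * 2 ^ m"
  proof -
    have "2 * length q - 1 = Suc (2*k)" "2 * length q - 2 = 2*k" "m - 2 = j" "m - 1 = Suc j" using k m by auto
    then show ?thesis by (simp only: binomial_Suc_Suc add_mult_distrib add.commute)
  qed
  finally show ?thesis .
qed

lemma PAB_all: "n \<ge> 2 \<Longrightarrow> PAB n"
proof (induction n rule: less_induct)
  case (less n)
  show ?case
  proof (cases "n = 2")
    case True
    show ?thesis unfolding PAB_def
    proof (intro allI impI)
      fix q :: lpath assume q: "length q \<ge> 1"
      then obtain k where k: "length q = Suc k" by (cases "length q") auto
      show "card (An n q) * 4 ^ length q = ((n-2) choose (2 * length q - 1)) * 2 ^ n \<and>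
        card (Bn n q) * 4 ^ length q = ((n-2) choose (2 * length q - 2)) * 2 ^ n"
        using True by (simp add: An_2 card_Bn_2 k)
    qed
  next
    case False
    then obtain n0 where n0: "n = Suc n0" "n0 \<ge> 2" using less.prems by (cases n) auto
    have IH: "PAB n0" using less.IH n0 by simp
    have IH1: "n0 - 1 \<ge> 2 \<longrightarrow> PAB (n0 - 1)" using less.IH n0 by simp
    show ?thesis unfolding PAB_def
    proof (intro allI impI conjI)
      fix q :: lpath assume q: "length q \<ge> 1"
      obtain j where j: "n0 = Suc (Suc j)" using n0 by (metis add_2_eq_Suc le_Suc_ex)
      obtain k where k: "length q = Suc k" using q by (cases "length q") auto
      have fA: "card (fib n0 q) * 4 ^ length q = ((n0-1) choose (2 * length q - 1)) * 2 ^ n0"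
        using card_fib_from[of n0 q] IH n0 q by simp
      have "card (An n q) * 4 ^ length q = 2 * (card (fib n0 q) * 4 ^ length q)"
        using card_An_Suc[OF n0(2)] n0 by simp
      also have "\<dots> = ((n-2) choose (2 * length q - 1)) * 2 ^ n"
        using fA by (simp add: n0 j k)
      finally show "card (An n q) * 4 ^ length q = ((n-2) choose (2 * length q - 1)) * 2 ^ n" .
      have q0: "q \<noteq> []" using q by auto
      have B0: "card (Bn n0 q) * 4 ^ length q = ((n0-2) choose (2 * length q - 2)) * 2 ^ n0"
        using IH q by (simp add: PAB_def)
      have "card (Bn n q) * 4 ^ length q = 2 * (card (Bn n0 q) * 4 ^ length q) + card (fib (n0-1) (tl q)) * 4 ^ length q"
        using card_Bn_Suc[OF n0(2) q0] n0 by (simp add: algebra_simps)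
      also have "\<dots> = ((n-2) choose (2 * length q - 2)) * 2 ^ n"
      proof (cases k)
        case 0
        then have "tl q = []" using k by (cases q) auto
        then show ?thesis using B0 fib_empty[of "Suc j"] by (simp add: n0 j k 0)
      next
        case (Suc k')
        have lt: "length (tl q) = Suc k'" using k Suc by simp
        have "card (fib (n0-1) (tl q)) * 4 ^ length (tl q) = ((n0-1-1) choose (2 * length (tl q) - 1)) * 2 ^ (n0-1)"
          using card_fib_from[of "n0-1" "tl q"] IH1 n0 lt by simp
        then have "card (fib (n0-1) (tl q)) * 4 ^ length q = 4 * ((n0-1-1) choose (2 * length (tl q) - 1)) * 2 ^ (n0-1)"
          using k lt by (simp add: algebra_simps)
        moreover have "2 * length q - 2 = Suc (2*k'+1)" "2 * length (tl q) - 1 = 2*k'+1"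
          "n - 2 = Suc j" "n0 - 2 = j" "n0 - 1 - 1 = j" "n = Suc (Suc (Suc j))" "n0 - 1 = Suc j" "n0 = Suc (Suc j)"
          using k Suc lt n0 j by auto
        moreover have ar: "2 * (a * 2 ^ Suc (Suc j)) + 4 * b * 2 ^ Suc j = (b + a) * 2 ^ Suc (Suc (Suc j))" for a b :: nat
          by (simp add: algebra_simps)
        ultimately show ?thesis using B0 ar[of "j choose Suc (2*k'+1)" "j choose (2*k'+1)"]
          by (simp only: binomial_Suc_Suc)
      qed
      finally show "card (Bn n q) * 4 ^ length q = ((n-2) choose (2 * length q - 2)) * 2 ^ n" .
    qed
  qed
qed

lemma card_fib:
  assumes "n \<ge> 1" "length q \<ge> 1"
  shows "card (fib n q) * 4 ^ length q = ((n-1) choose (2 * length q - 1)) * 2 ^ n"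
  using card_fib_from[OF assms(1) _ assms(2)] PAB_all by blast


definition Hn :: "nat \<Rightarrow> lpath set" where
  "Hn n = {p. length p = n \<and> horizontal (hd p)}"

definition rinv :: "step \<Rightarrow> step" where "rinv s = rot (rot (rot s))"

lemma rot_rinv: "rot (rinv s) = s" "rinv (rot s) = s"
  by (cases s; simp add: rinv_def)+

lemma vert_rot: "vertical (rot s) \<longleftrightarrow> horizontal s" "vertical (rinv s) \<longleftrightarrow> horizontal s"
  by (cases s; simp add: rinv_def)+

lemma finite_Hn: "finite (Hn n)"
  by (rule finite_subset[OF _ finite_len[of n]]) (auto simp: Hn_def)

lemma sum_norm_first:
  fixes g :: "lpath \<Rightarrow> real"
  assumes n: "n \<ge> 1"
  shows "(\<Sum>p\<in>{p. length p = n}. g (norm_first p)) = 2 * (\<Sum>p\<in>Hn n. g p)"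
proof -
  define V where "V = {p :: lpath. length p = n \<and> vertical (hd p)}"
  have split: "{p. length p = n} = Hn n \<union> V" "Hn n \<inter> V = {}" by (auto simp: Hn_def V_def)
  have fV: "finite V" by (rule finite_subset[OF _ finite_len[of n]]) (auto simp: V_def)
  have "(\<Sum>p\<in>{p. length p = n}. g (norm_first p)) = (\<Sum>p\<in>Hn n. g (norm_first p)) + (\<Sum>p\<in>V. g (norm_first p))"
    unfolding split(1) by (rule sum.union_disjoint) (use finite_Hn fV split(2) in auto)
  also have "(\<Sum>p\<in>Hn n. g (norm_first p)) = (\<Sum>p\<in>Hn n. g p)"
    by (intro sum.cong refl) (auto simp: Hn_def norm_first_def)
  also have "(\<Sum>p\<in>V. g (norm_first p)) = (\<Sum>p\<in>V. g (map rot p))"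
    by (intro sum.cong refl) (auto simp: V_def norm_first_def)
  also have "\<dots> = (\<Sum>p\<in>Hn n. g p)"
  proof (rule sum.reindex_bij_betw)
    show "bij_betw (map rot) V (Hn n)"
    proof (rule bij_betw_byWitness[where f'="map rinv"])
      show "\<forall>a\<in>V. map rinv (map rot a) = a" by (simp add: rot_rinv map_idI)
      show "\<forall>a\<in>Hn n. map rot (map rinv a) = a" by (simp add: rot_rinv map_idI)
      show "map rot ` V \<subseteq> Hn n"
      proof
        fix x assume "x \<in> map rot ` V"
        then obtain p where p: "p \<in> V" "x = map rot p" by auto
        then have "p \<noteq> []" using n by (auto simp: V_def)
        then show "x \<in> Hn n" using p by (cases p) (auto simp: V_def Hn_def vert_rot)
      qed
      show "map rinv ` Hn n \<subseteq> V"
      proof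
        fix x assume "x \<in> map rinv ` Hn n"
        then obtain p where p: "p \<in> Hn n" "x = map rinv p" by auto
        then have "p \<noteq> []" using n by (auto simp: Hn_def)
        then show "x \<in> V" using p by (cases p) (auto simp: V_def Hn_def vert_rot)
      qed
    qed
  qed
  finally show ?thesis by simp
qed

lemma sum_norm_last:
  fixes g :: "lpath \<Rightarrow> real"
  assumes n: "n \<ge> 2"
  shows "(\<Sum>p\<in>Hn n. g (norm_last p)) = 2 * (\<Sum>p\<in>Nn n. g p)"
proof -
  define M where "M = {p :: lpath. length p = n \<and> horizontal (hd p) \<and> horizontal (last p)}"
  have split: "Hn n = Nn n \<union> M" "Nn n \<inter> M = {}" by (auto simp: Hn_def M_def Nn_def)
  have fM: "finite M" by (rule finite_subset[OF _ finite_len[of n]]) (auto simp: M_def)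
  have "(\<Sum>p\<in>Hn n. g (norm_last p)) = (\<Sum>p\<in>Nn n. g (norm_last p)) + (\<Sum>p\<in>M. g (norm_last p))"
    unfolding split(1) by (rule sum.union_disjoint) (use finite_Nn fM split(2) in auto)
  also have "(\<Sum>p\<in>Nn n. g (norm_last p)) = (\<Sum>p\<in>Nn n. g p)"
    by (intro sum.cong refl) (auto simp: Nn_def norm_last_def)
  also have "(\<Sum>p\<in>M. g (norm_last p)) = (\<Sum>p\<in>M. g (butlast p @ [rot (last p)]))"
    by (intro sum.cong refl) (auto simp: M_def norm_last_def)
  also have "\<dots> = (\<Sum>p\<in>Nn n. g p)"
  proof (rule sum.reindex_bij_betw)
    have hdb: "hd (butlast p @ [s]) = hd p" if lp: "length p \<ge> 2" for p :: lpath and s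
    proof -
      obtain x y r where "p = x # y # r" using len2[of p] lp by auto
      then show ?thesis by simp
    qed
    show "bij_betw (\<lambda>p. butlast p @ [rot (last p)]) M (Nn n)"
    proof (rule bij_betw_byWitness[where f'="\<lambda>p. butlast p @ [rinv (last p)]"])
      show "\<forall>a\<in>M. butlast (butlast a @ [rot (last a)]) @ [rinv (last (butlast a @ [rot (last a)]))] = a"
        using n by (auto simp: M_def rot_rinv intro!: append_butlast_last_id)
      show "\<forall>a\<in>Nn n. butlast (butlast a @ [rinv (last a)]) @ [rot (last (butlast a @ [rinv (last a)]))] = a"
        using n by (auto simp: Nn_def rot_rinv intro!: append_butlast_last_id)
      show "(\<lambda>p. butlast p @ [rot (last p)]) ` M \<subseteq> Nn n"
        using n hdb by (auto simp: M_def Nn_def vert_rot)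
      show "(\<lambda>p. butlast p @ [rinv (last p)]) ` Nn n \<subseteq> M"
        using n hdb by (auto simp: M_def Nn_def vert_rot)
    qed
  qed
  finally show ?thesis by simp
qed

lemma norm_in_Nn:
  assumes "length p = n" "n \<ge> 2"
  shows "norm_last (norm_first p) \<in> Nn n"
proof -
  obtain x y r where p: "p = x # y # r" using len2[of p] assms by auto
  define p1 where "p1 = norm_first p"
  have l1: "length p1 = n" "horizontal (hd p1)"
    using assms by (auto simp: p1_def norm_first_def p vert_rot)
  obtain a b c where p1: "p1 = a # b # c" using len2[of p1] l1 assms by auto
  show ?thesis
    using l1 assms unfolding p1_def[symmetric]
    by (auto simp: norm_last_def Nn_def p1 vert_rot)
qed


lemma card_fib_nat:
  assumes n: "n \<ge> 1" and k: "length q \<ge> 1"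
  shows "card (fib n q) = ((n-1) choose (2 * length q - 1)) * 2 ^ (n - 2 * length q)"
proof (cases "2 * length q \<le> n")
  case True
  have e: "n = (n - 2*length q) + 2*length q" using True by simp
  have "(2::nat) ^ n = 2 ^ (n - 2 * length q) * 2 ^ (2 * length q)"
    by (metis e power_add)
  also have "(2::nat) ^ (2 * length q) = 4 ^ length q" by (simp add: power_mult)
  finally have "(2::nat) ^ n = 2 ^ (n - 2 * length q) * 4 ^ length q" .
  then have "card (fib n q) * 4 ^ length q = ((n-1) choose (2 * length q - 1)) * 2 ^ (n - 2 * length q) * 4 ^ length q"
    using card_fib[OF n k] by simp
  then show ?thesis by simp
next
  case False
  then have c0: "((n-1) choose (2 * length q - 1)) = 0" using n k by simp
  have "card (fib n q) * 4 ^ length q = 0" using card_fib[OF n k] by (simp only: c0 mult_0)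
  then show ?thesis by (simp only: c0 mult_0 mult_eq_0_iff) simp
qed

lemma PhiL_len:
  assumes "length p = n" "n \<ge> 2"
  shows "1 \<le> length (PhiL p) \<and> 2 * length (PhiL p) \<le> n"
proof -
  define p' where "p' = norm_last (norm_first p)"
  have p': "p' \<in> Nn n" using norm_in_Nn[OF assms] by (simp add: p'_def)
  then have "p' \<noteq> []" using assms by (auto simp: Nn_def)
  then have k: "length (blocks p') \<ge> 1" using blocks_ne[of p'] by (cases "blocks p'") auto
  have "p' \<in> fib n (blocks p')" using p' by (simp add: fib_def)
  then have "card (fib n (blocks p')) > 0" using finite_fib(1) by (auto simp: card_gt_0_iff)
  then have "((n-1) choose (2 * length (blocks p') - 1)) > 0"
    using card_fib_nat[of n "blocks p'"] assms k by simp
  then have "2 * length (blocks p') - 1 \<le> n - 1" by (simp add: zero_less_binomial_iff)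
  then show ?thesis using k by (simp add: PhiL_def p'_def[symmetric])
qed

lemma cdeg_ex: "length p \<ge> 1 \<Longrightarrow> \<exists>m. length ((PhiL ^^ m) p) = 1"
proof (induction "length p" arbitrary: p rule: less_induct)
  case less
  show ?case
  proof (cases "length p = 1")
    case True then show ?thesis by (intro exI[of _ 0]) simp
  next
    case False
    then have l: "length p \<ge> 2" using less.prems by simp
    have "1 \<le> length (PhiL p)" "length (PhiL p) < length p" using PhiL_len[OF refl l] by auto
    then obtain m where "length ((PhiL ^^ m) (PhiL p)) = 1" using less.hyps by blast
    then show ?thesis by (intro exI[of _ "Suc m"]) (simp add: funpow_Suc_right del: funpow.simps)
  qed
qed

lemma cdeg_1: "length p = 1 \<Longrightarrow> cdeg p = 0"
  unfolding cdeg_def by (rule Least_eq_0) simp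

lemma cdeg_Suc: "length p \<ge> 2 \<Longrightarrow> cdeg p = Suc (cdeg (PhiL p))"
proof -
  assume l: "length p \<ge> 2"
  obtain m where m: "length ((PhiL ^^ m) p) = 1" using cdeg_ex[of p] l by auto
  have "cdeg p = Suc (LEAST m. length ((PhiL ^^ Suc m) p) = 1)"
    unfolding cdeg_def by (rule Least_Suc[where P="\<lambda>m. length ((PhiL ^^ m) p) = 1", OF m]) (use l in simp)
  also have "(\<lambda>m. (PhiL ^^ Suc m) p) = (\<lambda>m. (PhiL ^^ m) (PhiL p))"
    by (simp add: funpow_Suc_right del: funpow.simps)
  finally show ?thesis by (simp add: cdeg_def)
qed

lemma cdeg_lt: "length p \<ge> 1 \<Longrightarrow> cdeg p < length p"
proof (induction "length p" arbitrary: p rule: less_induct)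
  case less
  show ?case
  proof (cases "length p = 1")
    case True then show ?thesis by (simp add: cdeg_1)
  next
    case False
    then have l: "length p \<ge> 2" using less.prems by simp
    have "1 \<le> length (PhiL p)" "2 * length (PhiL p) \<le> length p" using PhiL_len[OF refl l] by auto
    then show ?thesis using less.hyps[of "PhiL p"] cdeg_Suc[OF l] by simp
  qed
qed

definition Tot :: "lpath \<Rightarrow> real" where
  "Tot p = (\<Sum>r\<le>cdeg p. real (length ((PhiL ^^ r) p)))"

lemma Tot_1: "length p = 1 \<Longrightarrow> Tot p = 1"
  by (simp add: Tot_def cdeg_1)

lemma Tot_Suc: "length p \<ge> 2 \<Longrightarrow> Tot p = real (length p) + Tot (PhiL p)"
  unfolding Tot_def cdeg_Suc
  by (subst sum.atMost_Suc_shift) (simp add: funpow_Suc_right del: funpow.simps)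


lemma card_len: "card {p :: lpath. length p = n} = 4 ^ n"
proof -
  have "card (UNIV :: step set) = 4" unfolding UNIV_step by simp
  then show ?thesis using card_lists_length_eq[of "UNIV :: step set" n] by simp
qed

lemma blocks_len:
  assumes p: "p \<in> Nn n" and n: "n \<ge> 1"
  shows "1 \<le> length (blocks p) \<and> length (blocks p) \<le> n"
proof -
  have "p \<noteq> []" using p n by (auto simp: Nn_def)
  have k: "length (blocks p) \<ge> 1" using blocks_ne[OF \<open>p \<noteq> []\<close>] by (cases "blocks p") auto
  have "p \<in> fib n (blocks p)" using p by (simp add: fib_def)
  then have "card (fib n (blocks p)) > 0" using finite_fib(1) by (auto simp: card_gt_0_iff)
  then have "((n-1) choose (2 * length (blocks p) - 1)) > 0"
    using card_fib_nat[OF n k] by simp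
  then have "2 * length (blocks p) - 1 \<le> n - 1" by (simp add: zero_less_binomial_iff)
  then show ?thesis using k by simp
qed

definition S :: "nat \<Rightarrow> real" where
  "S n = (\<Sum>p\<in>{p. length p = n}. Tot p)"

lemma S_rec:
  assumes n: "n \<ge> 2"
  shows "S n = real n * 4 ^ n + 4 * (\<Sum>k=1..n. real ((n-1) choose (2*k-1)) * 2 ^ (n - 2*k) * S k)"
proof -
  have "S n = (\<Sum>p\<in>{p. length p = n}. real n + Tot (PhiL p))"
    unfolding S_def by (intro sum.cong refl) (use n in \<open>simp add: Tot_Suc\<close>)
  also have "\<dots> = real n * 4 ^ n + (\<Sum>p\<in>{p. length p = n}. Tot (PhiL p))"
    by (simp add: sum.distrib card_len)
  also have "(\<Sum>p\<in>{p. length p = n}. Tot (PhiL p)) = (\<Sum>p\<in>{p. length p = n}. (\<lambda>p. Tot (blocks (norm_last p))) (norm_first p))"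
    by (simp add: PhiL_def)
  also have "\<dots> = 2 * (\<Sum>p\<in>Hn n. Tot (blocks (norm_last p)))"
    by (rule sum_norm_first) (use n in simp)
  also have "(\<Sum>p\<in>Hn n. Tot (blocks (norm_last p))) = 2 * (\<Sum>p\<in>Nn n. Tot (blocks p))"
    by (rule sum_norm_last[OF n])
  also have "(\<Sum>p\<in>Nn n. Tot (blocks p)) = (\<Sum>k=1..n. real ((n-1) choose (2*k-1)) * 2 ^ (n - 2*k) * S k)"
  proof -
    define QQ where "QQ = (\<Union>k\<in>{1..n}. {q :: lpath. length q = k})"
    have fQ: "finite QQ" unfolding QQ_def using finite_len by auto
    have "(\<Sum>p\<in>Nn n. Tot (blocks p)) = (\<Sum>q\<in>QQ. \<Sum>p\<in>{p \<in> Nn n. blocks p = q}. Tot (blocks p))"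
    proof (rule sum.group[symmetric, OF finite_Nn fQ])
      show "blocks ` Nn n \<subseteq> QQ" using blocks_len n by (force simp: QQ_def)
    qed
    also have "\<dots> = (\<Sum>q\<in>QQ. real (card (fib n q)) * Tot q)"
    proof (intro sum.cong refl)
      fix q
      have "(\<Sum>p\<in>fib n q. Tot (blocks p)) = (\<Sum>p\<in>fib n q. Tot q)"
        by (intro sum.cong refl) (simp add: fib_def)
      then show "(\<Sum>p\<in>{p \<in> Nn n. blocks p = q}. Tot (blocks p)) = real (card (fib n q)) * Tot q"
        by (simp add: fib_def[symmetric])
    qed
    also have "\<dots> = (\<Sum>k=1..n. \<Sum>q\<in>{q. length q = k}. real (card (fib n q)) * Tot q)"
      unfolding QQ_def by (rule sum.UNION_disjoint) (auto simp: finite_len)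
    also have "\<dots> = (\<Sum>k=1..n. real ((n-1) choose (2*k-1)) * 2 ^ (n - 2*k) * S k)"
    proof (intro sum.cong refl)
      fix k assume k: "k \<in> {1..n}"
      have "(\<Sum>q\<in>{q. length q = k}. real (card (fib n q)) * Tot q)
          = (\<Sum>q\<in>{q. length q = k}. real ((n-1) choose (2*k-1)) * 2 ^ (n - 2*k) * Tot q)"
        by (intro sum.cong refl) (use k n in \<open>simp add: card_fib_nat\<close>)
      then show "(\<Sum>q\<in>{q. length q = k}. real (card (fib n q)) * Tot q) = real ((n-1) choose (2*k-1)) * 2 ^ (n - 2*k) * S k"
        by (simp add: S_def sum_distrib_left)
    qed
    finally show ?thesis .
  qed
  finally show ?thesis by simp
qed

lemma S_1: "S 1 = 4"
proof -
  have "S 1 = (\<Sum>p\<in>{p :: lpath. length p = 1}. 1)"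
    unfolding S_def by (intro sum.cong refl) (simp add: Tot_1)
  then show ?thesis using card_len[of 1] by simp
qed

lemma E_L_total_S:
  assumes n: "n \<ge> 1"
  shows "E_L_total n = S n / 4 ^ n"
proof -
  have z: "E_L n r = 0" if "r \<notin> {..<n}" for r
  proof -
    have "fringe_size p r = 0" if "length p = n" for p
      using cdeg_lt[of p] that n \<open>r \<notin> {..<n}\<close> by (auto simp: fringe_size_def)
    then show ?thesis by (simp add: E_L_def)
  qed
  have "E_L_total n = (\<Sum>r<n. E_L n r)"
    unfolding E_L_total_def by (rule sums_unique[symmetric], rule sums_finite) (use z in auto)
  also have "\<dots> = (\<Sum>p\<in>{p. length p = n}. \<Sum>r<n. real (fringe_size p r)) / 4 ^ n"
    by (simp add: E_L_def card_len sum_divide_distrib[symmetric]) (rule sum.swap)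
  also have "(\<Sum>p\<in>{p. length p = n}. \<Sum>r<n. real (fringe_size p r)) = S n"
    unfolding S_def
  proof (intro sum.cong refl)
    fix p assume "p \<in> {p :: lpath. length p = n}"
    then have l: "length p = n" by simp
    then have c: "cdeg p < n" using cdeg_lt[of p] n by simp
    have "(\<Sum>r<n. real (fringe_size p r)) = (\<Sum>r\<le>cdeg p. real (fringe_size p r))"
      by (rule sum.mono_neutral_right) (use c in \<open>auto simp: fringe_size_def\<close>)
    also have "\<dots> = Tot p" unfolding Tot_def by (intro sum.cong refl) (simp add: fringe_size_def)
    finally show "(\<Sum>r<n. real (fringe_size p r)) = Tot p" .
  qed
  finally show ?thesis .
qed


lemma S_eq_G: "n \<ge> 1 \<Longrightarrow> S n = G n"
proof (induction n rule: less_induct)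
  case (less n)
  show ?case
  proof (cases "n = 1")
    case True
    have "G 1 = 4" using G_rec[of 1] by simp
    then show ?thesis using True S_1 by simp
  next
    case False
    then have n2: "n \<ge> 2" using less.prems by simp
    have "(\<Sum>k=1..n. real ((n-1) choose (2*k-1)) * 2 ^ (n - 2*k) * S k)
        = (\<Sum>k=1..n. real ((n-1) choose (2*k-1)) * 2 ^ (n - 2*k) * G k)"
    proof (intro sum.cong refl)
      fix k assume k: "k \<in> {1..n}"
      show "real ((n-1) choose (2*k-1)) * 2 ^ (n - 2*k) * S k = real ((n-1) choose (2*k-1)) * 2 ^ (n - 2*k) * G k"
      proof (cases "2*k-1 \<le> n-1")
        case True
        then have "k < n" using k n2 by simp
        then show ?thesis using less.IH[of k] k by simp
      qed simp
    qed
    then show ?thesis using S_rec[OF n2] G_rec[of n] n2 by simp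
  qed
qed

theorem corollary3:
  fixes n :: nat
  assumes "n \<ge> 1"
  shows "E_L_total n =
    4 / (3 * 4 ^ n) *
    (\<Sum>k=1..n.
       (2 * real k ^ 3 * (2 - 1 / 2 ^ multiplicity (2::nat) k)
        + real k * (2 ^ (multiplicity (2::nat) k + 1) - 1))
       * (binom_int (2 * n - 1) (int n - int k) - binom_int (2 * n - 1) (int n - int k - 1)))"
proof -
  have b: "binom_int (2 * n - 1) (int n - int k) - binom_int (2 * n - 1) (int n - int k - 1) = real_of_int (Bw n (int k))" for k
  proof -
    have e1: "int (2*n-1) - 2 * (int n - int k) = 2 * int k - 1" using assms by simp
    have e2: "int (2*n-1) - 2 * (int n - int k - 1) = 2 * int k + 1" using assms by simp
    show ?thesis using w_binom[of "2*n-1" "int n - int k"] w_binom[of "2*n-1" "int n - int k - 1"]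
      unfolding e1 e2 Bw_def by simp
  qed
  have "E_L_total n = G n / 4 ^ n" using E_L_total_S[OF assms] S_eq_G[OF assms] by simp
  also have "\<dots> = 4 / (3 * 4 ^ n) * (\<Sum>k=1..n. acoef k * Bw n (int k))"
    by (simp add: G_def)
  finally show ?thesis unfolding b acoef_def .
qed


end
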